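(* Let $\mathcal{M}_A$ denote the set of multiway-growth-approximable functions. For every polynomial $p$ with $p\in\mathcal{M}_A$, the set $\mathcal{M}_A$ contains a function asymptotically equal (in the sense of $\Theta$) to $x\mapsto\ln(x)\cdot p(x)$.
   Context: A (string-based) multiway system is a triple $(R,s_{\text{init}},\Sigma)$ with $\Sigma$ a finite alphabet, $R$ a finite set of string replacement rules over $\Sigma$, and $s_{\text{init}}\in\Sigma^*$. Its states graph has as vertices the strings reachable from $s_{\text{init}}$, with an edge $u\to v$ if $v$ arises from $u$ by replacing one occurrence of a rule's left side by its right side. The growth function $g_M(n)$ is the number of states at shortest-path distance $n-1$ from $s_{\text{init}}$. For $h:\mathbb{N}_+\to\mathbb{N}$, $L_{\mathbb{N}}(h):\mathbb{R}_{\ge0}\to\mathbb{R}_{\ge0}$ is the polygonal chain from $(0,0)$ through the points $(n,h(n))$. A function $f:\mathbb{R}_{\ge0}\to\mathbb{R}_{\ge0}$ is multiway-growth-approximable if there is a multiway system $M$ with $f\in\Theta(L_{\mathbb{N}}(g_M))$. *)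

theory Defs
  imports Complex_Main "HOL-Computational_Algebra.Polynomial" "HOL-Library.Landau_Symbols"
begin

record multiway_system =
  mw_rules :: "(nat list \<times> nat list) set"
  mw_init  :: "nat list"
  mw_alph  :: "nat set"

definition wf_multiway :: "multiway_system \<Rightarrow> bool" where
  "wf_multiway M \<longleftrightarrow> finite (mw_alph M) \<and> finite (mw_rules M)
     \<and> (\<forall>(l, r) \<in> mw_rules M. set l \<subseteq> mw_alph M \<and> set r \<subseteq> mw_alph M)
     \<and> set (mw_init M) \<subseteq> mw_alph M"

definition mw_step :: "multiway_system \<Rightarrow> (nat list \<times> nat list) set" where
  "mw_step M = {(u, v). \<exists>(l, r) \<in> mw_rules M. \<exists>x y. u = x @ l @ y \<and> v = x @ r @ y}"

definition mw_at_dist :: "multiway_system \<Rightarrow> nat \<Rightarrow> nat list \<Rightarrow> bool" where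
  "mw_at_dist M k v \<longleftrightarrow> (mw_init M, v) \<in> mw_step M ^^ k
      \<and> (\<forall>j < k. (mw_init M, v) \<notin> mw_step M ^^ j)"

text \<open>Growth function g_M(n) = number of states at distance n-1 (for n \<ge> 1).\<close>
definition growth :: "multiway_system \<Rightarrow> nat \<Rightarrow> nat" where
  "growth M n = card {v. mw_at_dist M (n - 1) v}"

text \<open>Polygonal chain through (0,0) and the points (n, h n), n \<ge> 1.\<close>
definition poly_chain :: "(nat \<Rightarrow> nat) \<Rightarrow> real \<Rightarrow> real" where
  "poly_chain h x =
     (let h' = (\<lambda>n. if n = 0 then 0 else real (h n)); n = nat \<lfloor>x\<rfloor>
      in if x < 0 then 0 else h' n + (x - real n) * (h' (Suc n) - h' n))"

definition multiway_growth_approximable :: "(real \<Rightarrow> real) \<Rightarrow> bool" where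
  "multiway_growth_approximable f \<longleftrightarrow>
     (\<forall>x \<ge> 0. f x \<ge> 0) \<and>
     (\<exists>M. wf_multiway M \<and> f \<in> \<Theta>[at_top](poly_chain (growth M)))"

end

theory Submission
  imports Defs
begin

lemma uniq_split:
  assumes "x @ c # y = x' @ c # y'" "c \<notin> set x'" "c \<notin> set y'"
  shows "x = x' \<and> y = y'"
  by (metis assms(1) assms(3) assms(2) append_Cons_eq_iff)

lemma first_split:
  assumes "a @ c # b = x @ c # y" "c \<notin> set a"
  shows "(x = a \<and> y = b) \<or> (\<exists>x''. x = a @ c # x'' \<and> b = x'' @ c # y)"
  using assms
proof (induction a arbitrary: x)
  case Nil
  then show ?case by (cases x) auto
next
  case (Cons h a)
  then show ?case by (cases x) auto
qed

lemma prefix_split: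
  assumes "P @ w = x @ c # y" "c \<notin> set P"
  shows "\<exists>x'. x = P @ x' \<and> w = x' @ c # y"
  using assms
proof (induction P arbitrary: x)
  case Nil
  then show ?case by auto
next
  case (Cons h P)
  then show ?case by (cases x) auto
qed

definition enc :: "nat list \<Rightarrow> nat list" where
  "enc ts = concat (map (\<lambda>t. replicate t 7 @ [6]) ts)"

lemma enc_simps[simp]: "enc [] = []" "enc (t # ts) = replicate t 7 @ 6 # enc ts"
  by (simp_all add: enc_def)

lemma enc_append[simp]: "enc (xs @ ys) = enc xs @ enc ys"
  by (simp add: enc_def)

lemma set_enc: "set (enc ts) \<subseteq> {6,7}"
  by (induction ts) auto

lemma length_enc: "length (enc ts) = sum_list ts + length ts"
  by (induction ts) auto

lemma enc_zeros: "enc (replicate n 0) = replicate n 6"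
  by (induction n) auto

lemma six_in_enc: "ts \<noteq> [] \<Longrightarrow> 6 \<in> set (enc ts)"
  by (cases ts) auto

lemma rep7_inj: "replicate a (7::nat) @ 6 # u = replicate b 7 @ 6 # v \<Longrightarrow> a = b \<and> u = v"
proof (induction a arbitrary: b)
  case 0
  then show ?case by (cases b) auto
next
  case (Suc a)
  then show ?case by (cases b) auto
qed

lemma enc_inj: "enc ts = enc ts' \<Longrightarrow> ts = ts'"
proof (induction ts arbitrary: ts')
  case Nil
  then show ?case by (cases ts') auto
next
  case (Cons t ts)
  then show ?case by (cases ts') (auto dest: rep7_inj)
qed

lemma sum_list_upd_Suc:
  "j < length ts \<Longrightarrow> sum_list (ts[j := Suc (ts ! j)]) = Suc (sum_list (ts :: nat list))"
proof (induction ts arbitrary: j)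
  case Nil
  then show ?case by simp
next
  case (Cons t ts)
  then show ?case by (cases j) auto
qed

lemma enc_split:
  assumes "enc ts @ z = x @ 6 # y" "6 \<notin> set z"
  shows "\<exists>j < length ts. x @ 7 # 6 # y = enc (ts[j := Suc (ts ! j)]) @ z"
  using assms
proof (induction ts arbitrary: x)
  case Nil
  then show ?case by auto
next
  case (Cons t ts)
  have "replicate t 7 @ 6 # (enc ts @ z) = x @ 6 # y" using Cons.prems by simp
  then have "(x = replicate t 7 \<and> y = enc ts @ z) \<or> (\<exists>x''. x = replicate t 7 @ 6 # x'' \<and> enc ts @ z = x'' @ 6 # y)"
    by (intro first_split) auto
  then show ?case
  proof
    assume h: "x = replicate t 7 \<and> y = enc ts @ z"
    have "x @ 7 # 6 # y = enc ((t # ts)[0 := Suc ((t # ts) ! 0)]) @ z"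
      using h by (simp add: replicate_append_same[symmetric])
    then show ?thesis by force
  next
    assume "\<exists>x''. x = replicate t 7 @ 6 # x'' \<and> enc ts @ z = x'' @ 6 # y"
    then obtain x'' where h: "x = replicate t 7 @ 6 # x''" "enc ts @ z = x'' @ 6 # y" by blast
    from Cons.IH[OF h(2) Cons.prems(2)] obtain j where j: "j < length ts"
      "x'' @ 7 # 6 # y = enc (ts[j := Suc (ts ! j)]) @ z" by blast
    have "x @ 7 # 6 # y = enc ((t # ts)[Suc j := Suc ((t # ts) ! Suc j)]) @ z"
      using h j by simp
    then show ?thesis using j by force
  qed
qed

lemma enc_upd_decomp:
  assumes "j < length ts"
  shows "enc ts = enc (take j ts) @ replicate (ts ! j) 7 @ [6] @ enc (drop (Suc j) ts)"
    and "enc (ts[j := Suc (ts ! j)]) = enc (take j ts) @ replicate (ts ! j) 7 @ [7, 6] @ enc (drop (Suc j) ts)"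
proof -
  show "enc ts = enc (take j ts) @ replicate (ts ! j) 7 @ [6] @ enc (drop (Suc j) ts)"
    using id_take_nth_drop[OF assms] by (metis append.assoc append_Cons append_Nil enc_append enc_simps(2))
  show "enc (ts[j := Suc (ts ! j)]) = enc (take j ts) @ replicate (ts ! j) 7 @ [7, 6] @ enc (drop (Suc j) ts)"
    using upd_conv_take_nth_drop[OF assms] by (simp add: replicate_append_same[symmetric])
qed


definition rls :: "nat \<Rightarrow> (nat list \<times> nat list) set" where
  "rls d = {([4,2],[3,3,4]), ([4,1],[5,1]), ([3,5],[5,2,2]), ([0,5],[0,4]),
            ([4,1], replicate (Suc d) 6 @ [1]), ([6],[7,6])}"

definition MS :: "nat \<Rightarrow> multiway_system" where
  "MS d = \<lparr>mw_rules = rls d, mw_init = [0,4,2,1], mw_alph = {0..7}\<rparr>"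

lemma wf_MS: "wf_multiway (MS d)"
  unfolding wf_multiway_def MS_def rls_def by auto

definition Astr :: "nat \<Rightarrow> nat \<Rightarrow> nat list" where
  "Astr k i = 0 # replicate (2*i) 3 @ 4 # replicate (4^k - i) 2 @ [1]"
definition Bstr :: "nat \<Rightarrow> nat \<Rightarrow> nat list" where
  "Bstr k j = 0 # replicate (2*4^k - j) 3 @ 5 # replicate (2*j) 2 @ [1]"
definition Cstr :: "nat \<Rightarrow> nat list \<Rightarrow> nat list" where
  "Cstr k ts = 0 # replicate (2*4^k) 3 @ enc ts @ [1]"
definition TT :: "nat \<Rightarrow> nat" where
  "TT k = 4^k - 1 + 2*k"

lemma TT_Suc: "TT (Suc k) = TT k + 4^k + 1 + 2 * 4^k + 1"
proof -
  have "(1::nat) \<le> 4^k" by simp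
  then show ?thesis unfolding TT_def by simp
qed

lemma TT_0[simp]: "TT 0 = 0" by (simp add: TT_def)

definition inS :: "nat \<Rightarrow> nat list \<Rightarrow> nat \<Rightarrow> bool" where
  "inS d v n \<longleftrightarrow>
     (\<exists>k i. i \<le> 4^k \<and> v = Astr k i \<and> n = TT k + i) \<or>
     (\<exists>k j. j \<le> 2*4^k \<and> v = Bstr k j \<and> n = TT k + 4^k + 1 + j) \<or>
     (\<exists>k ts. length ts = Suc d \<and> v = Cstr k ts \<and> n = TT k + 4^k + 1 + sum_list ts)"

lemma step_iff: "(u, v) \<in> mw_step (MS d) \<longleftrightarrow>
   (\<exists>x y. u = x @ [4,2] @ y \<and> v = x @ [3,3,4] @ y) \<or>
   (\<exists>x y. u = x @ [4,1] @ y \<and> v = x @ [5,1] @ y) \<or>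
   (\<exists>x y. u = x @ [3,5] @ y \<and> v = x @ [5,2,2] @ y) \<or>
   (\<exists>x y. u = x @ [0,5] @ y \<and> v = x @ [0,4] @ y) \<or>
   (\<exists>x y. u = x @ [4,1] @ y \<and> v = x @ (replicate (Suc d) 6 @ [1]) @ y) \<or>
   (\<exists>x y. u = x @ [6] @ y \<and> v = x @ [7,6] @ y)"
  unfolding mw_step_def MS_def rls_def by auto

lemma set_Astr: "set (Astr k i) \<subseteq> {0,1,2,3,4}" by (auto simp: Astr_def)
lemma set_Bstr: "set (Bstr k i) \<subseteq> {0,1,2,3,5}" by (auto simp: Bstr_def)
lemma set_Cstr: "set (Cstr k ts) \<subseteq> {0,1,3,6,7}" using set_enc[of ts] by (auto simp: Cstr_def)

lemma no_occ: "u = x @ l @ y \<Longrightarrow> c \<in> set l \<Longrightarrow> c \<notin> set u \<Longrightarrow> False"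
  by auto

lemma step_A:
  assumes "i \<le> 4^k" "(Astr k i, v) \<in> mw_step (MS d)"
  shows "(i < 4^k \<and> v = Astr k (Suc i)) \<or> (i = 4^k \<and> (v = Bstr k 0 \<or> v = Cstr k (replicate (Suc d) 0)))"
proof -
  let ?P = "0 # replicate (2*i) 3"
  let ?Q = "replicate (4^k - i) 2 @ [1]"
  have A: "Astr k i = ?P @ 4 # ?Q" by (simp add: Astr_def)
  have n4: "(4::nat) \<notin> set ?P" "(4::nat) \<notin> set ?Q" by auto
  have n5: "5 \<notin> set (Astr k i)" "6 \<notin> set (Astr k i)" using set_Astr[of k i] by auto
  from assms(2)[unfolded step_iff] show ?thesis
  proof (elim disjE exE conjE)
    fix x y assume u: "Astr k i = x @ [4,2] @ y" and v: "v = x @ [3,3,4] @ y"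
    from uniq_split[of x 4 "2 # y" ?P ?Q] u A n4 have xy: "x = ?P" "2 # y = ?Q" by auto
    then have lt: "i < 4^k" by (cases "4^k - i") auto
    then have "y = replicate (4^k - Suc i) 2 @ [1]" using xy(2)
      by (metis Suc_diff_Suc list.inject replicate_Suc append_Cons)
    then have "v = Astr k (Suc i)" using v xy(1) lt
      by (simp add: Astr_def replicate_append_same[symmetric])
    then show ?thesis using lt by simp
  next
    fix x y assume u: "Astr k i = x @ [4,1] @ y" and v: "v = x @ [5,1] @ y"
    from uniq_split[of x 4 "1 # y" ?P ?Q] u A n4 have xy: "x = ?P" "1 # y = ?Q" by auto
    then have eq: "i = 4^k" "y = []" using assms(1) by (cases "4^k - i"; auto)+
    then show ?thesis using v xy by (simp add: Bstr_def)
  next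
    fix x y assume u: "Astr k i = x @ [3,5] @ y"
    then show ?thesis using n5 by auto
  next
    fix x y assume u: "Astr k i = x @ [0,5] @ y"
    then show ?thesis using n5 by auto
  next
    fix x y assume u: "Astr k i = x @ [4,1] @ y" and v: "v = x @ (replicate (Suc d) 6 @ [1]) @ y"
    from uniq_split[of x 4 "1 # y" ?P ?Q] u A n4 have xy: "x = ?P" "1 # y = ?Q" by auto
    then have eq: "i = 4^k" "y = []" using assms(1) by (cases "4^k - i"; auto)+
    then show ?thesis using v xy by (simp add: Cstr_def enc_zeros)
  next
    fix x y assume u: "Astr k i = x @ [6] @ y"
    then show ?thesis using n5 by auto
  qed
qed

lemma step_B:
  assumes "j \<le> 2*4^k" "(Bstr k j, v) \<in> mw_step (MS d)"
  shows "(j < 2*4^k \<and> v = Bstr k (Suc j)) \<or> (j = 2*4^k \<and> v = Astr (Suc k) 0)"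
proof -
  let ?P = "0 # replicate (2*4^k - j) 3"
  let ?Q = "replicate (2*j) 2 @ [1]"
  have B: "Bstr k j = ?P @ 5 # ?Q" by (simp add: Bstr_def)
  have n5: "(5::nat) \<notin> set ?P" "(5::nat) \<notin> set ?Q" by auto
  have n4: "4 \<notin> set (Bstr k j)" "6 \<notin> set (Bstr k j)" using set_Bstr[of k j] by auto
  from assms(2)[unfolded step_iff] show ?thesis
  proof (elim disjE exE conjE)
    fix x y assume u: "Bstr k j = x @ [4,2] @ y"
    then show ?thesis using n4 by auto
  next
    fix x y assume u: "Bstr k j = x @ [4,1] @ y"
    then show ?thesis using n4 by auto
  next
    fix x y assume u: "Bstr k j = x @ [3,5] @ y" and v: "v = x @ [5,2,2] @ y"
    from uniq_split[of "x @ [3]" 5 y ?P ?Q] u B n5 have xy: "x @ [3] = ?P" "y = ?Q" by auto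
    then have lt: "j < 2*4^k" by (cases "2*4^k - j") auto
    have r: "replicate (2*4^k - j) (3::nat) = replicate (2*4^k - Suc j) 3 @ [3]"
      using lt by (metis Suc_diff_Suc replicate_Suc replicate_append_same)
    have "x = 0 # replicate (2*4^k - Suc j) 3" using xy(1) unfolding r
      by (metis append1_eq_conv append_Cons)
    then have "v = Bstr k (Suc j)" using v xy(2) lt
      by (simp add: Bstr_def replicate_append_same[symmetric])
    then show ?thesis using lt by simp
  next
    fix x y assume u: "Bstr k j = x @ [0,5] @ y" and v: "v = x @ [0,4] @ y"
    have x0: "x = []"
    proof (cases x)
      case Nil then show ?thesis .
    next
      case (Cons h x')
      then have "x' @ [0,5] @ y = replicate (2*4^k - j) 3 @ 5 # ?Q" using u B by simp
      moreover have "(0::nat) \<in> set (x' @ [0,5] @ y)" by simp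
      ultimately have "(0::nat) \<in> set (replicate (2*4^k - j) 3 @ 5 # ?Q)" by metis
      then show ?thesis by auto
    qed
    then have y5: "5 # y = replicate (2*4^k - j) 3 @ 5 # ?Q" using u B by simp
    have z: "2*4^k - j = 0"
    proof (rule ccontr)
      assume "2*4^k - j \<noteq> 0"
      then obtain q where "2*4^k - j = Suc q" by (cases "2*4^k - j") auto
      then show False using y5 by simp
    qed
    then have "y = ?Q" using y5 by simp
    then have eq: "j = 2*4^k" "x = []" "y = ?Q" using assms(1) z x0 by auto
    then show ?thesis using v by (simp add: Astr_def)
  next
    fix x y assume u: "Bstr k j = x @ [4,1] @ y"
    then show ?thesis using n4 by auto
  next
    fix x y assume u: "Bstr k j = x @ [6] @ y"
    then show ?thesis using n4 by auto
  qed
qed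

lemma step_C:
  assumes "(Cstr k ts, v) \<in> mw_step (MS d)"
  shows "\<exists>j < length ts. v = Cstr k (ts[j := Suc (ts ! j)])"
proof -
  have n4: "4 \<notin> set (Cstr k ts)" "5 \<notin> set (Cstr k ts)" using set_Cstr[of k ts] by auto
  from assms[unfolded step_iff] show ?thesis
  proof (elim disjE exE conjE)
    fix x y assume u: "Cstr k ts = x @ [6] @ y" and v: "v = x @ [7,6] @ y"
    have "(0 # replicate (2*4^k) 3) @ (enc ts @ [1]) = x @ 6 # y" using u by (simp add: Cstr_def)
    from prefix_split[OF this] obtain x' where x': "x = (0 # replicate (2*4^k) 3) @ x'"
      "enc ts @ [1] = x' @ 6 # y" by auto
    from enc_split[OF x'(2)] obtain j where "j < length ts" "x' @ 7 # 6 # y = enc (ts[j := Suc (ts ! j)]) @ [1]"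
      by auto
    then show ?thesis using v x'(1) by (auto simp: Cstr_def)
  qed (use n4 in auto)
qed

lemma stepA: "i < 4^k \<Longrightarrow> (Astr k i, Astr k (Suc i)) \<in> mw_step (MS d)"
  unfolding step_iff
proof (intro disjI1 exI conjI)
  assume "i < 4^k"
  then have r: "replicate (4^k - i) (2::nat) = 2 # replicate (4^k - Suc i) 2"
    by (metis Suc_diff_Suc replicate_Suc)
  show "Astr k i = (0 # replicate (2*i) 3) @ [4,2] @ (replicate (4^k - Suc i) 2 @ [1])"
    unfolding Astr_def r by simp
  show "Astr k (Suc i) = (0 # replicate (2*i) 3) @ [3,3,4] @ (replicate (4^k - Suc i) 2 @ [1])"
    unfolding Astr_def by (simp add: replicate_append_same[symmetric])
qed

lemma stepAB: "(Astr k (4^k), Bstr k 0) \<in> mw_step (MS d)"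
  unfolding step_iff
  by (rule disjI2, rule disjI1, rule exI[of _ "0 # replicate (2*4^k) 3"], rule exI[of _ "[]"])
     (simp add: Astr_def Bstr_def)

lemma stepAC: "(Astr k (4^k), Cstr k (replicate (Suc d) 0)) \<in> mw_step (MS d)"
  unfolding step_iff
  apply (rule disjI2, rule disjI2, rule disjI2, rule disjI2, rule disjI1)
  apply (rule exI[of _ "0 # replicate (2*4^k) 3"], rule exI[of _ "[]"])
  by (simp add: Astr_def Cstr_def enc_zeros del: replicate_Suc)

lemma stepB: "j < 2*4^k \<Longrightarrow> (Bstr k j, Bstr k (Suc j)) \<in> mw_step (MS d)"
  unfolding step_iff
  apply (rule disjI2, rule disjI2, rule disjI1)
proof (intro exI conjI)
  assume "j < 2*4^k"
  then have r: "replicate (2*4^k - j) (3::nat) = replicate (2*4^k - Suc j) 3 @ [3]"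
    by (metis Suc_diff_Suc replicate_Suc replicate_append_same)
  show "Bstr k j = (0 # replicate (2*4^k - Suc j) 3) @ [3,5] @ (replicate (2*j) 2 @ [1])"
    unfolding Bstr_def r by simp
  show "Bstr k (Suc j) = (0 # replicate (2*4^k - Suc j) 3) @ [5,2,2] @ (replicate (2*j) 2 @ [1])"
    unfolding Bstr_def by simp
qed

lemma stepBA: "(Bstr k (2*4^k), Astr (Suc k) 0) \<in> mw_step (MS d)"
  unfolding step_iff
  apply (rule disjI2, rule disjI2, rule disjI2, rule disjI1)
  apply (rule exI[of _ "[]"], rule exI[of _ "replicate (4*4^k) 2 @ [1]"])
  by (simp add: Astr_def Bstr_def)

lemma stepC: "j < length ts \<Longrightarrow> (Cstr k ts, Cstr k (ts[j := Suc (ts ! j)])) \<in> mw_step (MS d)"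
  unfolding step_iff
  apply (rule disjI2, rule disjI2, rule disjI2, rule disjI2, rule disjI2)
proof (intro exI conjI)
  assume j: "j < length ts"
  show "Cstr k ts = (0 # replicate (2*4^k) 3 @ enc (take j ts) @ replicate (ts ! j) 7) @ [6] @ (enc (drop (Suc j) ts) @ [1])"
    unfolding Cstr_def enc_upd_decomp(1)[OF j] by simp
  show "Cstr k (ts[j := Suc (ts ! j)]) = (0 # replicate (2*4^k) 3 @ enc (take j ts) @ replicate (ts ! j) 7) @ [7,6] @ (enc (drop (Suc j) ts) @ [1])"
    unfolding Cstr_def enc_upd_decomp(2)[OF j] by simp
qed

lemma inS_A: "i \<le> 4^k \<Longrightarrow> n = TT k + i \<Longrightarrow> inS d (Astr k i) n"
  unfolding inS_def by blast
lemma inS_B: "j \<le> 2*4^k \<Longrightarrow> n = TT k + 4^k + 1 + j \<Longrightarrow> inS d (Bstr k j) n"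
  unfolding inS_def by blast
lemma inS_C: "length ts = Suc d \<Longrightarrow> n = TT k + 4^k + 1 + sum_list ts \<Longrightarrow> inS d (Cstr k ts) n"
  unfolding inS_def by blast

lemma inS_step:
  assumes "inS d u n" "(u, v) \<in> mw_step (MS d)"
  shows "inS d v (Suc n)"
  using assms(1)[unfolded inS_def]
proof (elim disjE exE conjE)
  fix k i assume h: "i \<le> 4^k" "u = Astr k i" "n = TT k + i"
  have "(i < 4^k \<and> v = Astr k (Suc i)) \<or> (i = 4^k \<and> (v = Bstr k 0 \<or> v = Cstr k (replicate (Suc d) 0)))"
    using step_A[OF h(1)] assms(2) h(2) by simp
  then show "inS d v (Suc n)"
  proof (elim disjE conjE)
    assume "i < 4^k" "v = Astr k (Suc i)" then show ?thesis using h(3) by (simp add: inS_A)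
  next
    assume "i = 4^k" "v = Bstr k 0" then show ?thesis using h(3) by (simp add: inS_B)
  next
    assume "i = 4^k" "v = Cstr k (replicate (Suc d) 0)" then show ?thesis using h(3)
      by (simp add: inS_C)
  qed
next
  fix k j assume h: "j \<le> 2*4^k" "u = Bstr k j" "n = TT k + 4^k + 1 + j"
  have "(j < 2*4^k \<and> v = Bstr k (Suc j)) \<or> (j = 2*4^k \<and> v = Astr (Suc k) 0)"
    using step_B[OF h(1)] assms(2) h(2) by simp
  then show "inS d v (Suc n)"
  proof (elim disjE conjE)
    assume "j < 2*4^k" "v = Bstr k (Suc j)" then show ?thesis using h(3) by (simp add: inS_B)
  next
    assume a: "j = 2*4^k" "v = Astr (Suc k) 0"
    have "Suc n = TT (Suc k) + 0" using h(3) TT_Suc[of k] a(1) by simp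
    then show ?thesis unfolding a(2) by (intro inS_A) auto
  qed
next
  fix k ts assume h: "length ts = Suc d" "u = Cstr k ts" "n = TT k + 4^k + 1 + sum_list ts"
  from step_C assms(2) h(2) obtain j where j: "j < length ts" "v = Cstr k (ts[j := Suc (ts ! j)])" by blast
  show "inS d v (Suc n)" unfolding j(2) using h sum_list_upd_Suc[OF j(1)]
    by (intro inS_C) auto
qed

lemma TT_ge: "2*k \<le> TT k"
proof -
  have "(1::nat) \<le> 4^k" by simp
  then show ?thesis unfolding TT_def by linarith
qed

lemma inS_pred:
  assumes "inS d v (Suc n)"
  shows "\<exists>u. inS d u n \<and> (u, v) \<in> mw_step (MS d)"
  using assms[unfolded inS_def]
proof (elim disjE exE conjE)
  fix k i assume h: "i \<le> 4^k" "v = Astr k i" "Suc n = TT k + i"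
  show ?thesis
  proof (cases i)
    case (Suc i')
    have "inS d (Astr k i') n" using h Suc by (intro inS_A) auto
    moreover have "(Astr k i', v) \<in> mw_step (MS d)" using stepA[of i' k d] h Suc by simp
    ultimately show ?thesis by blast
  next
    case 0
    have "k \<noteq> 0"
    proof
      assume "k = 0" then show False using h 0 by simp
    qed
    then obtain k' where k: "k = Suc k'" by (cases k) auto
    have "inS d (Bstr k' (2*4^k')) n" using h 0 k TT_Suc[of k'] by (intro inS_B) auto
    moreover have "(Bstr k' (2*4^k'), v) \<in> mw_step (MS d)" using stepBA[of k' d] h 0 k by simp
    ultimately show ?thesis by blast
  qed
next
  fix k j assume h: "j \<le> 2*4^k" "v = Bstr k j" "Suc n = TT k + 4^k + 1 + j"
  show ?thesis
  proof (cases j)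
    case (Suc j')
    have "inS d (Bstr k j') n" using h Suc by (intro inS_B) auto
    moreover have "(Bstr k j', v) \<in> mw_step (MS d)" using stepB[of j' k d] h Suc by simp
    ultimately show ?thesis by blast
  next
    case 0
    have "inS d (Astr k (4^k)) n" using h 0 by (intro inS_A) auto
    moreover have "(Astr k (4^k), v) \<in> mw_step (MS d)" using stepAB[of k d] h 0 by simp
    ultimately show ?thesis by blast
  qed
next
  fix k ts assume h: "length ts = Suc d" "v = Cstr k ts" "Suc n = TT k + 4^k + 1 + sum_list ts"
  show ?thesis
  proof (cases "sum_list ts = 0")
    case True
    then have "\<forall>x\<in>set ts. x = 0" by simp
    then have ts: "ts = replicate (Suc d) 0" using h(1)
      by (metis replicate_length_same)
    have "inS d (Astr k (4^k)) n" using h True by (intro inS_A) auto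
    moreover have "(Astr k (4^k), v) \<in> mw_step (MS d)" using stepAC[of k d] h ts by simp
    ultimately show ?thesis by blast
  next
    case False
    then obtain j where j: "j < length ts" "ts ! j \<noteq> 0"
      by (metis in_set_conv_nth sum_list_eq_0_iff)
    define ts' where "ts' = ts[j := ts ! j - 1]"
    have l: "length ts' = Suc d" "j < length ts'" using h j by (auto simp: ts'_def)
    have e: "ts = ts'[j := Suc (ts' ! j)]" using j by (auto simp: ts'_def)
    have "sum_list ts = Suc (sum_list ts')" using sum_list_upd_Suc[OF l(2)] e by simp
    then have "inS d (Cstr k ts') n" using h l by (intro inS_C) auto
    moreover have "(Cstr k ts', v) \<in> mw_step (MS d)" using stepC[OF l(2), of k d] e h by simp
    ultimately show ?thesis by blast
  qed
qed

lemma init_MS: "mw_init (MS d) = Astr 0 0" by (simp add: MS_def Astr_def)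

lemma inS_0: "inS d v 0 \<longleftrightarrow> v = Astr 0 0"
proof
  assume "inS d v 0"
  then show "v = Astr 0 0" unfolding inS_def using TT_ge
    by (metis add_is_0 le_zero_eq mult_is_0 zero_neq_numeral one_neq_zero)
next
  assume "v = Astr 0 0" then show "inS d v 0" unfolding inS_def by force
qed

lemma inS_reach: "inS d v n \<Longrightarrow> (mw_init (MS d), v) \<in> mw_step (MS d) ^^ n"
proof (induction n arbitrary: v)
  case 0
  then show ?case using inS_0 init_MS by simp
next
  case (Suc n)
  then obtain u where "inS d u n" "(u, v) \<in> mw_step (MS d)" using inS_pred by blast
  then show ?case using Suc.IH relpow_Suc_I by metis
qed

lemma reach_inS: "(mw_init (MS d), v) \<in> mw_step (MS d) ^^ n \<Longrightarrow> inS d v n"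
proof (induction n arbitrary: v)
  case 0
  then show ?case using inS_0 init_MS by simp
next
  case (Suc n)
  then show ?case using inS_step by (meson relpow_Suc_E)
qed

lemma cnt_rep[simp]: "count_list (replicate n x) x = n"
  by (induction n) auto

lemma cnt_A: "count_list (Astr k i) 3 = 2*i" "count_list (Astr k i) 2 = 4^k - i"
  by (auto simp: Astr_def count_list_0_iff)
lemma cnt_B: "count_list (Bstr k j) 3 = 2*4^k - j" "count_list (Bstr k j) 2 = 2*j"
  by (auto simp: Bstr_def count_list_0_iff)
lemma cnt_enc: "count_list (enc ts) 3 = 0"
  using set_enc[of ts] by (auto simp: count_list_0_iff)
lemma cnt_C: "count_list (Cstr k ts) 3 = 2*4^k"
  by (simp add: Cstr_def cnt_enc)

lemma Cstr_inj: "Cstr k ts = Cstr k' ts' \<Longrightarrow> k = k' \<and> ts = ts'"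
proof -
  assume e: "Cstr k ts = Cstr k' ts'"
  then have "2*4^k = (2::nat)*4^k'" using cnt_C by metis
  then have k: "k = k'" by simp
  then show ?thesis using e enc_inj by (simp add: Cstr_def)
qed

lemma inS_unique:
  assumes "inS d v n" "inS d v n'"
  shows "n = n'"
proof -
  have a4: "4 \<in> set (Astr k i)" for k i by (simp add: Astr_def)
  have b5: "5 \<in> set (Bstr k i)" for k i by (simp add: Bstr_def)
  have c6: "length ts = Suc d \<Longrightarrow> 6 \<in> set (Cstr k ts)" for k ts
  proof -
    assume "length ts = Suc d"
    then have "ts \<noteq> []" by auto
    then show ?thesis using six_in_enc[of ts] by (auto simp: Cstr_def)
  qed
  have An: "Astr k i = Astr k' i' \<Longrightarrow> i \<le> 4^k \<Longrightarrow> i' \<le> 4^k' \<Longrightarrow> k = k' \<and> i = i'" for k i k' i'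
  proof -
    assume e: "Astr k i = Astr k' i'" "i \<le> 4^k" "i' \<le> 4^k'"
    then have "2*i = 2*i'" "4^k - i = 4^k' - i'" using cnt_A by metis+
    then have ii: "i = i'" by simp
    then have "(4::nat)^k = 4^k'" using e(2,3) \<open>4^k - i = 4^k' - i'\<close> by arith
    then have "i = i'" "(4::nat)^k = 4^k'" using ii by auto
    then show ?thesis by simp
  qed
  have Bn: "Bstr k i = Bstr k' i' \<Longrightarrow> i \<le> 2*4^k \<Longrightarrow> i' \<le> 2*4^k' \<Longrightarrow> k = k' \<and> i = i'" for k i k' i'
  proof -
    assume e: "Bstr k i = Bstr k' i'" "i \<le> 2*4^k" "i' \<le> 2*4^k'"
    then have "2*4^k - i = 2*4^k' - i'" "2*i = 2*i'" using cnt_B by metis+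
    then have ii: "i = i'" by simp
    then have "2*(4::nat)^k = 2*4^k'" using e(2,3) \<open>2*4^k - i = 2*4^k' - i'\<close> by arith
    then have "i = i'" "(4::nat)^k = 4^k'" using ii by auto
    then show ?thesis by simp
  qed
  have a5: "5 \<notin> set (Astr k i)" "6 \<notin> set (Astr k i)" for k i using set_Astr[of k i] by auto
  have b4: "4 \<notin> set (Bstr k i)" "6 \<notin> set (Bstr k i)" for k i using set_Bstr[of k i] by auto
  have c4: "4 \<notin> set (Cstr k i)" "5 \<notin> set (Cstr k i)" for k i using set_Cstr[of k i] by auto
  from assms(1)[unfolded inS_def] show ?thesis
  proof (elim disjE exE conjE)
    fix k i assume h: "i \<le> 4^k" "v = Astr k i" "n = TT k + i"
    from assms(2)[unfolded inS_def] show ?thesis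
    proof (elim disjE exE conjE)
      fix k' i' assume h': "i' \<le> 4^k'" "v = Astr k' i'" "n' = TT k' + i'"
      then show ?thesis using h An[of k i k' i'] by simp
    qed (use h a4 b4 c4 in metis)+
  next
    fix k i assume h: "i \<le> 2*4^k" "v = Bstr k i" "n = TT k + 4^k + 1 + i"
    from assms(2)[unfolded inS_def] show ?thesis
    proof (elim disjE exE conjE)
      fix k' i' assume h': "i' \<le> 2*4^k'" "v = Bstr k' i'" "n' = TT k' + 4^k' + 1 + i'"
      then show ?thesis using h Bn[of k i k' i'] by simp
    qed (use h b5 a5 c4 in metis)+
  next
    fix k ts assume h: "length ts = Suc d" "v = Cstr k ts" "n = TT k + 4^k + 1 + sum_list ts"
    from assms(2)[unfolded inS_def] show ?thesis
    proof (elim disjE exE conjE)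
      fix k' ts' assume h': "length ts' = Suc d" "v = Cstr k' ts'" "n' = TT k' + 4^k' + 1 + sum_list ts'"
      then show ?thesis using h Cstr_inj[of k ts k' ts'] by simp
    qed (use h c6 a5 b4 in metis)+
  qed
qed

lemma at_dist_iff: "mw_at_dist (MS d) n v \<longleftrightarrow> inS d v n"
proof
  assume "mw_at_dist (MS d) n v"
  then show "inS d v n" unfolding mw_at_dist_def using reach_inS by blast
next
  assume h: "inS d v n"
  have "(mw_init (MS d), v) \<notin> mw_step (MS d) ^^ j" if "j < n" for j
  proof
    assume "(mw_init (MS d), v) \<in> mw_step (MS d) ^^ j"
    then have "inS d v j" by (rule reach_inS)
    then show False using inS_unique[OF h] that by simp
  qed
  then show "mw_at_dist (MS d) n v" unfolding mw_at_dist_def using inS_reach[OF h] by blast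
qed

lemma growth_MS: "growth (MS d) (Suc n) = card {v. inS d v n}"
proof -
  have "{v. mw_at_dist (MS d) n v} = {v. inS d v n}" using at_dist_iff by blast
  then show ?thesis unfolding growth_def by simp
qed

definition TS :: "nat \<Rightarrow> nat \<Rightarrow> nat list set" where
  "TS d t = {ts. length ts = Suc d \<and> sum_list ts = t}"

lemma TS_sub: "TS d t \<subseteq> {xs. set xs \<subseteq> {0..t} \<and> length xs = Suc d}"
  unfolding TS_def using member_le_sum_list by fastforce

lemma finite_TS: "finite (TS d t)"
  by (rule finite_subset[OF TS_sub]) (simp add: finite_lists_length_eq)

lemma card_TS: "card (TS d t) \<le> (Suc t)^d"
proof -
  have inj: "inj_on (take d) (TS d t)"
  proof
    fix xs ys assume xs: "xs \<in> TS d t" and ys: "ys \<in> TS d t" and e: "take d xs = take d ys"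
    have dx: "xs = take d xs @ [xs ! d]" using xs unfolding TS_def
      by (metis (mono_tags) mem_Collect_eq append.right_neutral append_eq_conv_conj lessI take_Suc_conv_app_nth)
    have dy: "ys = take d ys @ [ys ! d]" using ys unfolding TS_def
      by (metis (mono_tags) mem_Collect_eq append.right_neutral append_eq_conv_conj lessI take_Suc_conv_app_nth)
    have "sum_list xs = sum_list ys" using xs ys by (simp add: TS_def)
    then have "sum_list (take d xs) + xs ! d = sum_list (take d ys) + ys ! d"
      using dx dy by (metis sum_list_append sum_list_simps add.right_neutral)
    then have "xs ! d = ys ! d" using e by simp
    then show "xs = ys" using dx dy e by metis
  qed
  have sub: "take d ` TS d t \<subseteq> {xs. set xs \<subseteq> {0..t} \<and> length xs = d}"
    using TS_sub by (fastforce dest: in_set_takeD)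
  have "card (TS d t) = card (take d ` TS d t)" using card_image[OF inj] by simp
  also have "\<dots> \<le> card {xs. set xs \<subseteq> {0..t} \<and> length xs = d}"
    by (rule card_mono[OF _ sub]) (simp add: finite_lists_length_eq)
  also have "\<dots> = (Suc t)^d" by (simp add: card_lists_length_eq)
  finally show ?thesis .
qed

definition KU :: "nat \<Rightarrow> nat set" where "KU n = {k. 4^k \<le> n}"

lemma KU_sub: "KU n \<subseteq> {..n}"
proof
  fix k assume "k \<in> KU n"
  then have "4^k \<le> n" by (simp add: KU_def)
  moreover have "k < 4^k" by (induction k) auto
  ultimately show "k \<in> {..n}" by simp
qed

lemma finite_KU: "finite (KU n)" using finite_subset[OF KU_sub] by simp

lemma lev_sub:
  "{v. inS d v m} \<subseteq> (\<lambda>k. Astr k (m - TT k)) ` KU (Suc m) \<union> (\<lambda>k. Bstr k (m - TT k - 4^k - 1)) ` KU (Suc m)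
      \<union> (\<Union>k\<in>KU (Suc m). Cstr k ` TS d (m - TT k - 4^k - 1))" (is "_ \<subseteq> ?R")
proof
  fix v assume "v \<in> {v. inS d v m}"
  then have "inS d v m" by simp
  have T: "4^k \<le> Suc m" if "TT k \<le> m" for k
  proof -
    have "(1::nat) \<le> 4^k" by simp
    then show ?thesis using that unfolding TT_def by linarith
  qed
  from \<open>inS d v m\<close>[unfolded inS_def] show "v \<in> ?R"
  proof (elim disjE exE conjE)
    fix k i assume h: "i \<le> 4^k" "v = Astr k i" "m = TT k + i"
    then have "k \<in> KU (Suc m)" using T[of k] by (simp add: KU_def)
    moreover have "i = m - TT k" using h by simp
    ultimately show ?thesis using h by blast
  next
    fix k j assume h: "j \<le> 2*4^k" "v = Bstr k j" "m = TT k + 4^k + 1 + j"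
    then have "k \<in> KU (Suc m)" using T[of k] by (simp add: KU_def)
    moreover have "j = m - TT k - 4^k - 1" using h by simp
    ultimately show ?thesis using h by blast
  next
    fix k ts assume h: "length ts = Suc d" "v = Cstr k ts" "m = TT k + 4^k + 1 + sum_list ts"
    then have "k \<in> KU (Suc m)" using T[of k] by (simp add: KU_def)
    moreover have "ts \<in> TS d (m - TT k - 4^k - 1)" using h by (simp add: TS_def)
    ultimately show ?thesis using h by blast
  qed
qed

lemma finite_lev: "finite {v. inS d v m}"
  by (rule finite_subset[OF lev_sub]) (simp add: finite_KU finite_TS)

lemma lev_upper: "card {v. inS d v m} \<le> 3 * (card (KU (Suc m)) * (Suc m)^d)"
proof -
  let ?K = "KU (Suc m)"
  have c1: "card ((\<lambda>k. Astr k (m - TT k)) ` ?K) \<le> card ?K" by (rule card_image_le[OF finite_KU])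
  have c2: "card ((\<lambda>k. Bstr k (m - TT k - 4^k - 1)) ` ?K) \<le> card ?K" by (rule card_image_le[OF finite_KU])
  have c3: "card (\<Union>k\<in>?K. Cstr k ` TS d (m - TT k - 4^k - 1)) \<le> (\<Sum>k\<in>?K. card (Cstr k ` TS d (m - TT k - 4^k - 1)))"
    by (rule card_UN_le[OF finite_KU])
  have c4: "card (Cstr k ` TS d (m - TT k - 4^k - 1)) \<le> (Suc m)^d" for k
  proof -
    have "card (Cstr k ` TS d (m - TT k - 4^k - 1)) \<le> card (TS d (m - TT k - 4^k - 1))"
      by (rule card_image_le[OF finite_TS])
    also have "\<dots> \<le> (Suc (m - TT k - 4^k - 1))^d" by (rule card_TS)
    also have "\<dots> \<le> (Suc m)^d" by (rule power_mono) auto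
    finally show ?thesis .
  qed
  have c5: "(\<Sum>k\<in>?K. card (Cstr k ` TS d (m - TT k - 4^k - 1))) \<le> card ?K * (Suc m)^d"
    using sum_bounded_above[of ?K "\<lambda>k. card (Cstr k ` TS d (m - TT k - 4^k - 1))" "(Suc m)^d"] c4
    by simp
  have p: "1 \<le> (Suc m)^d" by simp
  let ?A = "(\<lambda>k. Astr k (m - TT k)) ` ?K"
  let ?B = "(\<lambda>k. Bstr k (m - TT k - 4^k - 1)) ` ?K"
  let ?C = "(\<Union>k\<in>?K. Cstr k ` TS d (m - TT k - 4^k - 1))"
  have "card {v. inS d v m} \<le> card (?A \<union> ?B \<union> ?C)"
    by (rule card_mono[OF _ lev_sub]) (simp add: finite_KU finite_TS)
  also have "\<dots> \<le> card ?K + card ?K + card ?K * (Suc m)^d"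
  proof -
    have "card (?A \<union> ?B \<union> ?C) \<le> card ?A + card ?B + card ?C"
    proof -
      have "card (?A \<union> ?B \<union> ?C) \<le> card (?A \<union> ?B) + card ?C" by (rule card_Un_le)
      moreover have "card (?A \<union> ?B) \<le> card ?A + card ?B" by (rule card_Un_le)
      ultimately show ?thesis by linarith
    qed
    then show ?thesis using c1 c2 c3 c5 by linarith
  qed
  also have "\<dots> \<le> 3 * (card ?K * (Suc m)^d)"
  proof -
    have "card ?K \<le> card ?K * (Suc m)^d" using p by simp
    then show ?thesis by linarith
  qed
  finally show ?thesis .
qed


lemma aux_lin: "4*a \<le> m \<Longrightarrow> 2*b \<le> m \<Longrightarrow> c \<le> b \<Longrightarrow> a + c \<le> (m::nat)" by linarith

lemma lt_pow4: "k < (4::nat)^k" by (induction k) auto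

definition KL :: "nat \<Rightarrow> nat set" where "KL m = {k. 4^(k+2) \<le> m}"

lemma finite_KL: "finite (KL m)"
proof (rule finite_subset[of _ "{..m}"])
  show "KL m \<subseteq> {..m}"
  proof
    fix k assume "k \<in> KL m"
    then have "4^(k+2) \<le> m" by (simp add: KL_def)
    moreover have "k < 4^k" by (induction k) auto
    moreover have "(4::nat)^k \<le> 4^(k+2)" by (rule power_increasing) auto
    ultimately show "k \<in> {..m}" by simp
  qed
qed simp

lemma sum_list_bound: "(\<forall>x\<in>set xs. x \<le> (q::nat)) \<Longrightarrow> sum_list xs \<le> length xs * q"
  by (induction xs) auto

lemma lev_lower: "card (KL m) * (Suc (m div (2*Suc d)))^d \<le> card {v. inS d v m}"
proof -
  define q where "q = m div (2*Suc d)"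
  define X where "X = {xs. set xs \<subseteq> {0..q} \<and> length xs = d}"
  define t where "t k = m - TT k - 4^k - 1" for k
  define F where "F k = Cstr k ` ((\<lambda>xs. xs @ [t k - sum_list xs]) ` X)" for k
  have fX: "finite X" unfolding X_def by (simp add: finite_lists_length_eq)
  have cX: "card X = (Suc q)^d" unfolding X_def by (simp add: card_lists_length_eq)
  have dq: "2 * (d * q) \<le> m"
  proof -
    have "(2*Suc d) * q \<le> m" unfolding q_def by (rule times_div_less_eq_dividend)
    then show ?thesis by (simp add: algebra_simps)
  qed
  have sub: "F k \<subseteq> {v. inS d v m}" if k: "k \<in> KL m" for k
  proof
    fix v assume "v \<in> F k"
    then obtain xs where xs: "xs \<in> X" "v = Cstr k (xs @ [t k - sum_list xs])" unfolding F_def by blast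
    have "\<forall>x\<in>set xs. x \<le> q" using xs(1) unfolding X_def by auto
    then have s: "sum_list xs \<le> d * q" using sum_list_bound[of xs q] xs(1) unfolding X_def by simp
    have kk: "k \<le> 4^k" using lt_pow4[of k] by simp
    have "TT k + 4^k + 1 = 2 * 4^k + 2 * k"
    proof -
      have "(1::nat) \<le> 4^k" by simp
      then show ?thesis unfolding TT_def by linarith
    qed
    then have "4 * (TT k + 4^k + 1) = 8 * 4^k + 8 * k" by simp
    also have "\<dots> \<le> 16 * 4^k" using kk by simp
    finally have "4 * (TT k + 4^k + 1) \<le> 16 * 4^k" .
    moreover have "(4::nat)^(k+2) = 16*4^k" by simp
    ultimately have "4 * (TT k + 4^k + 1) \<le> 4^(k+2)" by simp
    then have "4 * (TT k + 4^k + 1) \<le> m" using k unfolding KL_def by simp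
    then have le: "TT k + 4^k + 1 + sum_list xs \<le> m" using dq s by (rule aux_lin)
    have "inS d (Cstr k (xs @ [t k - sum_list xs])) m"
      by (rule inS_C) (use xs(1) le in \<open>auto simp: X_def t_def\<close>)
    then show "v \<in> {v. inS d v m}" using xs by simp
  qed
  have inj1: "inj_on (\<lambda>xs. xs @ [t k - sum_list xs]) X" for k
    by (rule inj_onI) (auto simp: X_def)
  have inj2: "inj_on (Cstr k) A" for k A
    by (rule inj_onI) (auto dest: Cstr_inj)
  have cF: "card (F k) = (Suc q)^d" for k
    unfolding F_def by (simp add: card_image inj1 inj2 cX)
  have fF: "finite (F k)" for k unfolding F_def using fX by simp
  have disj: "\<forall>i\<in>KL m. \<forall>j\<in>KL m. i \<noteq> j \<longrightarrow> F i \<inter> F j = {}"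
    unfolding F_def by (auto dest: Cstr_inj)
  have "card (\<Union>k\<in>KL m. F k) = (\<Sum>k\<in>KL m. card (F k))"
    by (rule card_UN_disjoint[OF finite_KL]) (use fF disj in auto)
  also have "\<dots> = card (KL m) * (Suc q)^d" using cF by simp
  finally have "card (\<Union>k\<in>KL m. F k) = card (KL m) * (Suc q)^d" .
  moreover have "card (\<Union>k\<in>KL m. F k) \<le> card {v. inS d v m}"
    by (rule card_mono[OF finite_lev]) (use sub in blast)
  ultimately show ?thesis unfolding q_def by simp
qed

lemma ln4_ge1: "1 \<le> ln (4::real)"
  using exp_le by (subst ln_ge_iff) auto

lemma ln3_ge1: "1 \<le> ln (3::real)"
  using exp_le by (subst ln_ge_iff) auto

lemma card_KU: "n \<ge> 1 \<Longrightarrow> real (card (KU n)) \<le> 1 + ln (real n)"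
proof -
  assume n: "n \<ge> 1"
  have ln0: "0 \<le> ln (real n)" using n by simp
  let ?N = "nat \<lfloor>ln (real n)\<rfloor> + 1"
  have "KU n \<subseteq> {..<?N}"
  proof
    fix k assume "k \<in> KU n"
    then have "4^k \<le> n" by (simp add: KU_def)
    then have "real (4^k) \<le> real n" by linarith
    then have "ln (real (4^k)) \<le> ln (real n)" using n by simp
    then have "real k * ln 4 \<le> ln (real n)" by (simp add: ln_realpow)
    moreover have "real k \<le> real k * ln 4" using ln4_ge1 by (simp add: mult_le_cancel_left1)
    ultimately have "real k \<le> ln (real n)" by linarith
    then have "int k \<le> \<lfloor>ln (real n)\<rfloor>" by (simp add: le_floor_iff)
    then show "k \<in> {..<?N}" by simp
  qed
  then have "card (KU n) \<le> ?N" using card_mono[of "{..<?N}" "KU n"] by simp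
  then have "real (card (KU n)) \<le> real (nat \<lfloor>ln (real n)\<rfloor>) + 1" by linarith
  also have "real (nat \<lfloor>ln (real n)\<rfloor>) \<le> ln (real n)" using ln0 by linarith
  finally show ?thesis by simp
qed

lemma growth_upper:
  assumes "n \<ge> 3"
  shows "real (growth (MS d) n) \<le> 6 * (real n ^ d * ln (real n))"
proof -
  obtain m where m: "n = Suc m" using assms by (cases n) auto
  have "growth (MS d) n \<le> 3 * (card (KU n) * n^d)" using lev_upper[of d m] growth_MS m by simp
  then have "real (growth (MS d) n) \<le> 3 * (real (card (KU n)) * real n ^ d)"
    by (metis of_nat_le_iff of_nat_mult of_nat_power of_nat_numeral)
  also have "\<dots> \<le> 3 * ((1 + ln (real n)) * real n ^ d)"
    using card_KU[of n] assms by (intro mult_left_mono mult_right_mono) auto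
  also have "\<dots> \<le> 3 * ((2 * ln (real n)) * real n ^ d)"
  proof -
    have "ln 3 \<le> ln (real n)" using assms by simp
    then have "1 \<le> ln (real n)" using ln3_ge1 by linarith
    then show ?thesis by (intro mult_left_mono mult_right_mono) auto
  qed
  finally show ?thesis by (simp add: algebra_simps)
qed

lemma card_KL:
  assumes "m \<ge> 1"
  shows "ln (real m) / ln 4 - 2 \<le> real (card (KL m))"
proof -
  let ?F = "\<lfloor>ln (real m) / ln 4\<rfloor>"
  let ?N = "nat ?F - 1"
  have l4: "0 < ln (4::real)" using ln4_ge1 by linarith
  have ln0: "0 \<le> ln (real m) / ln 4" using assms l4 by simp
  have sub: "{..<?N} \<subseteq> KL m"
  proof
    fix k assume "k \<in> {..<?N}"
    then have "k + 2 \<le> nat ?F" by simp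
    then have "int (k + 2) \<le> int (nat ?F)" by linarith
    also have "int (nat ?F) = ?F" using ln0 by simp
    finally have "int (k + 2) \<le> ?F" .
    then have "real (k + 2) \<le> ln (real m) / ln 4" by (simp only: le_floor_iff of_int_of_nat_eq)
    then have a: "real (k + 2) * ln 4 \<le> ln (real m)" using pos_le_divide_eq[OF l4] by blast
    have b: "ln (real (4^(k+2))) = real (k + 2) * ln 4"
      using ln_realpow[of 4 "k+2"] by (simp only: of_nat_power of_nat_numeral)
    have "ln (real (4^(k+2))) \<le> ln (real m)" using a b by simp
    moreover have "0 < real (4^(k+2))" by simp
    moreover have "0 < real m" using assms by simp
    ultimately have "real (4^(k+2)) \<le> real m" using ln_le_cancel_iff by blast
    then have "4^(k+2) \<le> m" by (simp only: of_nat_le_iff)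
    then show "k \<in> KL m" by (simp add: KL_def)
  qed
  have "card {..<?N} \<le> card (KL m)" by (rule card_mono[OF finite_KL sub])
  then have c: "?N \<le> card (KL m)" by simp
  have "ln (real m) / ln 4 - 2 \<le> real ?N" using ln0 by linarith
  also have "\<dots> \<le> real (card (KL m))" using c by simp
  finally show ?thesis .
qed

lemma div_real_bound: "c > 0 \<Longrightarrow> real m / real c \<le> real (Suc (m div c))"
proof -
  assume c: "c > 0"
  have e: "real m = real (m div c) * real c + real (m mod c)"
    by (metis div_mult_mod_eq of_nat_add of_nat_mult)
  have "real (m mod c) \<le> real c" using c by simp
  then have "real m \<le> real (Suc (m div c)) * real c" using e by (simp add: algebra_simps)
  then show ?thesis using c by (simp add: pos_divide_le_eq)
qed

lemma growth_lower_aux: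
  assumes "m \<ge> 1"
  shows "(ln (real m) / ln 4 - 2) * (real m / (2 * real (Suc d))) ^ d \<le> real (growth (MS d) (Suc m))"
proof -
  have g: "card (KL m) * (Suc (m div (2*Suc d)))^d \<le> growth (MS d) (Suc m)"
    using lev_lower[of m d] growth_MS by simp
  have p: "(real m / (2 * real (Suc d))) ^ d \<le> real (Suc (m div (2*Suc d))) ^ d"
    using div_real_bound[of "2 * Suc d" m] by (intro power_mono) auto
  have "(ln (real m) / ln 4 - 2) * (real m / (2 * real (Suc d))) ^ d
      \<le> real (card (KL m)) * (real m / (2 * real (Suc d))) ^ d"
    using card_KL[OF assms] by (intro mult_right_mono) auto
  also have "\<dots> \<le> real (card (KL m)) * real (Suc (m div (2*Suc d))) ^ d"
    using p by (intro mult_left_mono) auto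
  also have "\<dots> \<le> real (growth (MS d) (Suc m))"
    using g by (metis of_nat_le_iff of_nat_mult of_nat_power)
  finally show ?thesis .
qed

definition c0 :: "nat \<Rightarrow> real" where "c0 d = 1 / (4 * ln 4 * (4 * real (Suc d)) ^ d)"

lemma c0_pos: "c0 d > 0"
  using ln4_ge1 unfolding c0_def by simp

lemma growth_lower:
  assumes "n \<ge> 1024"
  shows "c0 d * (real n ^ d * ln (real n)) \<le> real (growth (MS d) n)"
proof -
  obtain m where m: "n = Suc m" using assms by (cases n) auto
  have m1: "m \<ge> 1023" using assms m by simp
  have l4: "1 \<le> ln (4::real)" by (rule ln4_ge1)
  have lnm0: "0 \<le> ln (real m)" using m1 by simp
  have "ln (256::real) = 4 * ln 4"
    using ln_realpow[of 4 4] by simp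
  moreover have "ln 256 \<le> ln (real m)" using m1 by simp
  ultimately have "4 * ln 4 \<le> ln (real m)" by simp
  then have h2: "2 \<le> ln (real m) / (2 * ln 4)" using l4 by (simp add: le_divide_eq)
  then have s1: "ln (real m) / (2 * ln 4) \<le> ln (real m) / ln 4 - 2"
    using l4 by (simp add: field_simps)
  have "m * 2 \<le> m * m" using m1 by (intro mult_le_mono2) auto
  then have "n \<le> m * m" using m m1 by linarith
  then have "real n \<le> real m ^ 2" by (metis of_nat_le_iff of_nat_mult power2_eq_square)
  moreover have "0 < real n" using m by simp
  ultimately have "ln (real n) \<le> ln (real m ^ 2)" using ln_le_cancel_iff
    by (metis less_le_trans)
  then have s2: "ln (real n) \<le> 2 * ln (real m)" by (simp add: ln_realpow)
  have s3: "real n / (4 * real (Suc d)) \<le> real m / (2 * real (Suc d))"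
  proof -
    have "real n \<le> 2 * real m" using m m1 by simp
    then have "real n / (4 * real (Suc d)) \<le> (2 * real m) / (4 * real (Suc d))"
      by (intro divide_right_mono) auto
    also have "\<dots> = real m / (2 * real (Suc d))" by (simp add: field_simps)
    finally show ?thesis .
  qed
  have A: "ln (real n) / (4 * ln 4) \<le> ln (real m) / ln 4 - 2"
  proof -
    have "ln (real n) / (4 * ln 4) \<le> (2 * ln (real m)) / (4 * ln 4)"
      using s2 l4 by (intro divide_right_mono) auto
    also have "\<dots> = ln (real m) / (2 * ln 4)" by simp
    finally show ?thesis using s1 by linarith
  qed
  have B: "(real n / (4 * real (Suc d))) ^ d \<le> (real m / (2 * real (Suc d))) ^ d"
    using s3 by (intro power_mono) auto
  have "c0 d * (real n ^ d * ln (real n)) = (ln (real n) / (4 * ln 4)) * (real n / (4 * real (Suc d))) ^ d"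
    unfolding c0_def by (simp add: power_divide field_simps)
  also have "\<dots> \<le> (ln (real m) / ln 4 - 2) * (real m / (2 * real (Suc d))) ^ d"
    using A B m h2 s1 by (intro mult_mono) auto
  also have "\<dots> \<le> real (growth (MS d) (Suc m))"
    using growth_lower_aux[of m d] m1 by simp
  finally show ?thesis using m by simp
qed

lemma poly_lim: "((\<lambda>x::real. poly p x / x ^ degree p) \<longlongrightarrow> lead_coeff p) at_top"
proof (induction p)
  case 0
  then show ?case by simp
next
  case (pCons a p)
  show ?case
  proof (cases "p = 0")
    case True
    then show ?thesis by simp
  next
    case False
    have lim1: "((\<lambda>x::real. a / x ^ Suc (degree p)) \<longlongrightarrow> 0) at_top"
      by (rule tendsto_divide_0[OF tendsto_const])
         (rule filterlim_at_top_imp_at_infinity, rule filterlim_pow_at_top, simp, rule filterlim_ident)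
    have "((\<lambda>x::real. a / x ^ Suc (degree p) + poly p x / x ^ degree p) \<longlongrightarrow> 0 + lead_coeff p) at_top"
      by (rule tendsto_add[OF lim1 pCons.IH])
    moreover have "eventually (\<lambda>x::real. a / x ^ Suc (degree p) + poly p x / x ^ degree p
        = poly (pCons a p) x / x ^ degree (pCons a p)) at_top"
      using eventually_gt_at_top[of "0::real"]
    proof eventually_elim
      case (elim x)
      then show ?case using False by (simp add: degree_pCons_eq field_simps)
    qed
    ultimately show ?thesis using False by (simp add: tendsto_cong)
  qed
qed

lemma poly_theta: "p \<noteq> 0 \<Longrightarrow> (\<lambda>x::real. poly p x) \<in> \<Theta>[at_top](\<lambda>x. x ^ degree p)"
  by (rule bigthetaI_tendsto[OF _ poly_lim]) simp

definition HH :: "nat \<Rightarrow> real \<Rightarrow> real" where "HH d y = y ^ d * ln y"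

lemma HH_nonneg: "1 \<le> y \<Longrightarrow> 0 \<le> HH d y" by (simp add: HH_def)

lemma HH_mono: "1 \<le> y \<Longrightarrow> y \<le> z \<Longrightarrow> HH d y \<le> HH d z"
  unfolding HH_def by (intro mult_mono power_mono) auto

lemma HH_double: "2 \<le> y \<Longrightarrow> HH d (2 * y) \<le> 2 ^ Suc d * HH d y"
proof -
  assume y: "2 \<le> y"
  have "ln (2 * y) = ln 2 + ln y" using y by (simp add: ln_mult)
  also have "\<dots> \<le> 2 * ln y" using y by simp
  finally have l: "ln (2 * y) \<le> 2 * ln y" .
  have "HH d (2 * y) = 2 ^ d * y ^ d * ln (2 * y)" by (simp add: HH_def power_mult_distrib)
  also have "\<dots> \<le> 2 ^ d * y ^ d * (2 * ln y)" using l y by (intro mult_left_mono) auto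
  also have "\<dots> = 2 ^ Suc d * HH d y" by (simp add: HH_def)
  finally show ?thesis .
qed

lemma pc_floor:
  assumes "x \<ge> 1"
  shows "real (nat \<lfloor>x\<rfloor>) \<le> x" "x < real (nat \<lfloor>x\<rfloor>) + 1" "1 \<le> nat \<lfloor>x\<rfloor>"
proof -
  have f: "0 \<le> \<lfloor>x\<rfloor>" using assms by simp
  show "real (nat \<lfloor>x\<rfloor>) \<le> x" using f by simp
  show "x < real (nat \<lfloor>x\<rfloor>) + 1" using f by linarith
  show "1 \<le> nat \<lfloor>x\<rfloor>" using assms by linarith
qed

lemma pc_eq:
  assumes "x \<ge> 1"
  shows "poly_chain h x = real (h (nat \<lfloor>x\<rfloor>)) + (x - real (nat \<lfloor>x\<rfloor>)) * (real (h (Suc (nat \<lfloor>x\<rfloor>))) - real (h (nat \<lfloor>x\<rfloor>)))"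
proof -
  have n1: "1 \<le> nat \<lfloor>x\<rfloor>" using assms by linarith
  show ?thesis unfolding poly_chain_def Let_def using assms n1 by simp
qed

lemma convex_lo: "0 \<le> t \<Longrightarrow> t \<le> 1 \<Longrightarrow> lo \<le> a \<Longrightarrow> lo \<le> b \<Longrightarrow> lo \<le> a + t * (b - a :: real)"
proof -
  assume "0 \<le> t" "t \<le> 1" "lo \<le> a" "lo \<le> b"
  then have "(1 - t) * lo \<le> (1 - t) * a" "t * lo \<le> t * b" by (auto intro: mult_left_mono)
  then show ?thesis by (simp add: algebra_simps)
qed

lemma convex_hi: "0 \<le> t \<Longrightarrow> t \<le> 1 \<Longrightarrow> a \<le> hi \<Longrightarrow> b \<le> hi \<Longrightarrow> a + t * (b - a :: real) \<le> hi"
proof -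
  assume "0 \<le> t" "t \<le> 1" "a \<le> hi" "b \<le> hi"
  then have "(1 - t) * a \<le> (1 - t) * hi" "t * b \<le> t * hi" by (auto intro: mult_left_mono)
  then show ?thesis by (simp add: algebra_simps)
qed

lemma pc_nonneg: "x \<ge> 0 \<Longrightarrow> poly_chain h x \<ge> 0"
proof -
  assume x: "x \<ge> 0"
  define n where "n = nat \<lfloor>x\<rfloor>"
  have f: "0 \<le> \<lfloor>x\<rfloor>" using x by simp
  have t: "0 \<le> x - real n" "x - real n \<le> 1" unfolding n_def using f by linarith+
  have "poly_chain h x = (if n = 0 then 0 else real (h n)) + (x - real n) * ((if Suc n = 0 then 0 else real (h (Suc n))) - (if n = 0 then 0 else real (h n)))"
    unfolding poly_chain_def Let_def n_def using x by simp
  also have "\<dots> \<ge> 0" by (rule convex_lo[OF t]) auto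
  finally show ?thesis .
qed

lemma pc_upper:
  assumes "x \<ge> 3"
  shows "poly_chain (growth (MS d)) x \<le> 6 * 2 ^ Suc d * HH d x"
proof -
  let ?n = "nat \<lfloor>x\<rfloor>"
  have x1: "x \<ge> 1" using assms by simp
  note e = pc_eq[where h="growth (MS d)", OF x1] pc_floor[OF x1]
  have n3: "3 \<le> ?n" using assms by linarith
  have hx: "0 \<le> HH d x" using x1 by (rule HH_nonneg)
  have "real (growth (MS d) ?n) \<le> 6 * HH d (real ?n)" using growth_upper[OF n3] by (simp add: HH_def)
  also have "\<dots> \<le> 6 * HH d x" using e n3 by (intro mult_left_mono HH_mono) auto
  also have "\<dots> \<le> 6 * 2 ^ Suc d * HH d x"
  proof -
    have "(1::real) \<le> 2 ^ Suc d" by (rule one_le_power) simp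
    then have "(6::real) \<le> 6 * 2 ^ Suc d" by simp
    then show ?thesis using hx by (rule mult_right_mono)
  qed
  finally have a: "real (growth (MS d) ?n) \<le> 6 * 2 ^ Suc d * HH d x" .
  have "real (growth (MS d) (Suc ?n)) \<le> 6 * HH d (real (Suc ?n))" using growth_upper[of "Suc ?n" d] n3 by (simp add: HH_def)
  also have "\<dots> \<le> 6 * HH d (2 * x)"
  proof -
    have "real (Suc ?n) = real ?n + 1" by simp
    then have "real (Suc ?n) \<le> 2 * x" using e(2) assms by linarith
    then show ?thesis by (intro mult_left_mono HH_mono) auto
  qed
  also have "\<dots> \<le> 6 * (2 ^ Suc d * HH d x)" using assms by (intro mult_left_mono HH_double) auto
  finally have b: "real (growth (MS d) (Suc ?n)) \<le> 6 * 2 ^ Suc d * HH d x" by simp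
  show ?thesis unfolding e(1) by (rule convex_hi[OF _ _ a b]) (use e in linarith)+
qed

lemma pc_lower:
  assumes "x \<ge> 1024"
  shows "c0 d / 2 ^ Suc d * HH d x \<le> poly_chain (growth (MS d)) x"
proof -
  let ?n = "nat \<lfloor>x\<rfloor>"
  have x1: "x \<ge> 1" using assms by simp
  note e = pc_eq[where h="growth (MS d)", OF x1] pc_floor[OF x1]
  have n3: "1024 \<le> ?n" using assms by linarith
  have c: "0 < c0 d" by (rule c0_pos)
  have x2: "x \<le> 2 * real ?n" using e(3) n3 by linarith
  have "HH d x \<le> HH d (2 * real ?n)" using x2 x1 by (intro HH_mono) auto
  also have "\<dots> \<le> 2 ^ Suc d * HH d (real ?n)" using n3 by (intro HH_double) auto
  finally have hx: "HH d x / 2 ^ Suc d \<le> HH d (real ?n)" by (simp add: divide_le_eq mult.commute)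
  have "c0 d / 2 ^ Suc d * HH d x = c0 d * (HH d x / 2 ^ Suc d)" by simp
  also have "\<dots> \<le> c0 d * HH d (real ?n)" using hx c by (intro mult_left_mono) auto
  finally have lo: "c0 d / 2 ^ Suc d * HH d x \<le> c0 d * HH d (real ?n)" .
  have a: "c0 d * HH d (real ?n) \<le> real (growth (MS d) ?n)"
    using growth_lower[OF n3] by (simp add: HH_def)
  have "c0 d * HH d (real ?n) \<le> c0 d * HH d (real (Suc ?n))" using c n3 by (intro mult_left_mono HH_mono) auto
  also have "\<dots> \<le> real (growth (MS d) (Suc ?n))" using growth_lower[of "Suc ?n" d] n3 by (simp add: HH_def)
  finally have b: "c0 d * HH d (real ?n) \<le> real (growth (MS d) (Suc ?n))" .
  have "c0 d * HH d (real ?n) \<le> poly_chain (growth (MS d)) x"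
    unfolding e(1) by (rule convex_lo[OF _ _ a b]) (use e in linarith)+
  then show ?thesis using lo by linarith
qed

lemma pc_theta: "poly_chain (growth (MS d)) \<in> \<Theta>[at_top](HH d)"
proof (rule bigthetaI')
  show "0 < c0 d / 2 ^ Suc d" using c0_pos by simp
  show "0 < 6 * (2::real) ^ Suc d" by simp
  show "eventually (\<lambda>x. c0 d / 2 ^ Suc d * norm (HH d x) \<le> norm (poly_chain (growth (MS d)) x)
      \<and> norm (poly_chain (growth (MS d)) x) \<le> 6 * 2 ^ Suc d * norm (HH d x)) at_top"
    using eventually_ge_at_top[of "1024::real"]
  proof eventually_elim
    case (elim x)
    have h: "0 \<le> HH d x" using elim by (intro HH_nonneg) auto
    have p: "0 \<le> poly_chain (growth (MS d)) x" using elim by (intro pc_nonneg) auto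
    show ?case using pc_lower[OF elim, of d] pc_upper[of x d] elim h p by simp
  qed
qed


theorem mainTheorem10:
  fixes p :: "real poly"
  assumes "multiway_growth_approximable (\<lambda>x. poly p x)"
  shows "\<exists>f. multiway_growth_approximable f \<and> f \<in> \<Theta>[at_top](\<lambda>x. ln x * poly p x)"
proof (cases "p = 0")
  case True
  have "(\<lambda>x. poly p x) \<in> \<Theta>[at_top](\<lambda>x. ln x * poly p x)"
    using True by (intro bigthetaI_cong always_eventually) simp
  then show ?thesis using assms by blast
next
  case False
  define d where "d = degree p"
  define f where "f = poly_chain (growth (MS d))"
  have ap: "multiway_growth_approximable f"
    unfolding multiway_growth_approximable_def
  proof (intro conjI allI impI exI[of _ "MS d"])
    show "\<And>x. 0 \<le> x \<Longrightarrow> 0 \<le> f x" unfolding f_def by (rule pc_nonneg)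
    show "wf_multiway (MS d)" by (rule wf_MS)
    show "f \<in> \<Theta>[at_top](poly_chain (growth (MS d)))" unfolding f_def by (rule bigtheta_refl)
  qed
  have t1: "f \<in> \<Theta>[at_top](\<lambda>x. x ^ d * ln x)"
    using pc_theta[of d] unfolding f_def HH_def[abs_def] .
  have t2: "(\<lambda>x. ln x * poly p x) \<in> \<Theta>[at_top](\<lambda>x. ln x * x ^ d)"
    using landau_theta.mult[OF bigtheta_refl[of ln] poly_theta[OF False]] unfolding d_def .
  have t3: "(\<lambda>x::real. ln x * x ^ d) = (\<lambda>x. x ^ d * ln x)" by (simp add: mult.commute)
  have t4: "(\<lambda>x. ln x * poly p x) \<in> \<Theta>[at_top](\<lambda>x. x ^ d * ln x)"
    using t2 unfolding t3 .
  have t5: "(\<lambda>x. x ^ d * ln x) \<in> \<Theta>[at_top](\<lambda>x. ln x * poly p x)"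
    using t4 by (subst bigtheta_sym)
  have "f \<in> \<Theta>[at_top](\<lambda>x. ln x * poly p x)"
    by (rule landau_theta.bigtheta_trans1[OF t1 t5])
  then show ?thesis using ap by blast
qed

end
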